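(* Let $\Omega\subset B(\mathcal H)^d$ be an NC domain and $f:\Omega\to B(\mathcal H)^r$ an NC function. If $x,y\in\Omega$ and $L\in B(\mathcal H)$ satisfy $Lx=yL$, then $Lf(x)=f(y)L$.
   Context: Throughout, $\mathcal H$ is an infinite-dimensional separable complex Hilbert space, $B(\mathcal H)$ the bounded operators with the operator norm, and $\mathcal H^{(l)}$ ($l\in\mathbb N\cup\{\infty\}$) the direct sum of $l$ copies of $\mathcal H$. $B(\mathcal H)^d$ has the norm $\|x\|=\max_i\|x^i\|$. Operations on tuples are componentwise: for $L\in B(\mathcal H)$, $Lx=(Lx^1,\dots,Lx^d)$ and $xL=(x^1L,\dots,x^dL)$; for bounded invertible linear $s:\mathcal H\to\mathcal H^{(l)}$ and $z\in B(\mathcal H^{(l)})^d$, $s^{-1}zs=(s^{-1}z^1s,\dots,s^{-1}z^ds)$; for a finite or countable uniformly bounded sequence $x_1,x_2,\dots$ in $B(\mathcal H)^d$ of length $l$, $\bigoplus_n x_n\in B(\mathcal H^{(l)})^d$ has $i$-th entry $\bigoplus_n x_n^i$; block matrices of tuples are defined entrywise per coordinate. A set is unitarily invariant if $u^*xu$ lies in it for each of its elements $x$ and each unitary $u\in B(\mathcal H)$. NC domain: $\Omega\subset B(\mathcal H)^d$ is an NC domain if there are subsets $\Omega_1,\Omega_2,\dots$ of $\Omega$ with (1) $\Omega_k\subset\mathrm{int}\,\Omega_{k+1}$ (norm interior) and $\Omega=\bigcup_k\Omega_k$; (2) each $\Omega_k$ norm-bounded and unitarily invariant; (3) for every sequence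 $x_1,x_2,\dots$ in $\Omega_k$ of length $l\in\mathbb N\cup\{\infty\}$ there is a unitary $u:\mathcal H\to\mathcal H^{(l)}$ with $u^{-1}(\bigoplus_n x_n)u\in\Omega_k$. NC function: $f:\Omega\to B(\mathcal H)^r$ on an NC domain is NC if whenever $x,y\in\Omega$ and $s:\mathcal H\to\mathcal H^{(2)}$ is bounded, linear, invertible with $s^{-1}\begin{bmatrix}x&0\\0&y\end{bmatrix}s\in\Omega$, then $f\Big(s^{-1}\begin{bmatrix}x&0\\0&y\end{bmatrix}s\Big)=s^{-1}\begin{bmatrix}f(x)&0\\0&f(y)\end{bmatrix}s$. *)

theory Defs
  imports "HOL-Analysis.Analysis" "HOL-Library.Extended_Nat"
begin

text \<open>Concrete model: the Hilbert space H is l2(nat) over the complex numbers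
(every infinite-dimensional separable complex Hilbert space is unitarily
isomorphic to it).  H^(l) is modelled as the square-summable functions
nat \<times> nat \<Rightarrow> complex supported on {(n,m). n < l}.  Vectors are functions
'i \<Rightarrow> complex; operators are HOL functions, normalised to be zero off
their carrier.\<close>

definition sqsum :: "('i \<Rightarrow> complex) set" where
  "sqsum = {v. (\<lambda>i. (cmod (v i))^2) summable_on UNIV}"

definition vnorm :: "('i \<Rightarrow> complex) \<Rightarrow> real" where
  "vnorm v = sqrt (\<Sum>\<^sub>\<infinity>i. (cmod (v i))^2)"

definition HH :: "(nat \<Rightarrow> complex) set" where
  "HH = sqsum"

definition Hsum :: "enat \<Rightarrow> (nat \<times> nat \<Rightarrow> complex) set" where
  "Hsum l = {w. w \<in> sqsum \<and> (\<forall>n m. \<not> enat n < l \<longrightarrow> w (n, m) = 0)}"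

definition blin :: "('i \<Rightarrow> complex) set \<Rightarrow> ('j \<Rightarrow> complex) set
                      \<Rightarrow> (('i \<Rightarrow> complex) \<Rightarrow> ('j \<Rightarrow> complex)) \<Rightarrow> bool" where
  "blin A B T \<longleftrightarrow>
     (\<forall>v\<in>A. T v \<in> B) \<and>
     (\<forall>u\<in>A. \<forall>v\<in>A. \<forall>a b :: complex.
        T (\<lambda>i. a * u i + b * v i) = (\<lambda>j. a * T u j + b * T v j)) \<and>
     (\<exists>C. \<forall>v\<in>A. vnorm (T v) \<le> C * vnorm v)"

type_synonym op = "(nat \<Rightarrow> complex) \<Rightarrow> (nat \<Rightarrow> complex)"

definition zop :: "op" where
  "zop = (\<lambda>_ _. 0)"

definition Bop :: "op set" where
  "Bop = {T. blin HH HH T \<and> (\<forall>v. v \<notin> HH \<longrightarrow> T v = (\<lambda>_. 0))}"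

definition opnorm :: "op \<Rightarrow> real" where
  "opnorm T = Sup {vnorm (T v) | v. v \<in> HH \<and> vnorm v \<le> 1}"

text \<open>B(H)^d: d-tuples, represented as nat-indexed families, zero beyond d.\<close>
definition tup :: "nat \<Rightarrow> (nat \<Rightarrow> op) set" where
  "tup d = {x. (\<forall>i<d. x i \<in> Bop) \<and> (\<forall>i\<ge>d. x i = zop)}"

definition tnorm :: "nat \<Rightarrow> (nat \<Rightarrow> op) \<Rightarrow> real" where
  "tnorm d x = Max ((\<lambda>i. opnorm (x i)) ` {..<d})"

definition tdiff :: "(nat \<Rightarrow> op) \<Rightarrow> (nat \<Rightarrow> op) \<Rightarrow> (nat \<Rightarrow> op)" where
  "tdiff x y = (\<lambda>i v n. x i v n - y i v n)"

definition tint :: "nat \<Rightarrow> (nat \<Rightarrow> op) set \<Rightarrow> (nat \<Rightarrow> op) set" where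
  "tint d S = {x \<in> tup d. \<exists>e>0. \<forall>y\<in>tup d. tnorm d (tdiff y x) < e \<longrightarrow> y \<in> S}"

definition lmul :: "op \<Rightarrow> (nat \<Rightarrow> op) \<Rightarrow> (nat \<Rightarrow> op)" where
  "lmul L x = (\<lambda>i. L \<circ> x i)"

definition rmul :: "(nat \<Rightarrow> op) \<Rightarrow> op \<Rightarrow> (nat \<Rightarrow> op)" where
  "rmul x L = (\<lambda>i. x i \<circ> L)"

definition unitary_to :: "('j \<Rightarrow> complex) set \<Rightarrow> ((nat \<Rightarrow> complex) \<Rightarrow> ('j \<Rightarrow> complex)) \<Rightarrow> bool" where
  "unitary_to B u \<longleftrightarrow> blin HH B u \<and> bij_betw u HH B \<and> (\<forall>v\<in>HH. vnorm (u v) = vnorm v)"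

definition unitary_op :: "op \<Rightarrow> bool" where
  "unitary_op u \<longleftrightarrow> u \<in> Bop \<and> unitary_to HH u"

definition invertible_to :: "('j \<Rightarrow> complex) set \<Rightarrow> ((nat \<Rightarrow> complex) \<Rightarrow> ('j \<Rightarrow> complex)) \<Rightarrow> bool" where
  "invertible_to B s \<longleftrightarrow> blin HH B s \<and> bij_betw s HH B \<and> blin B HH (inv_into HH s)"

definition sim :: "((nat \<Rightarrow> complex) \<Rightarrow> ('j \<Rightarrow> complex))
                   \<Rightarrow> (nat \<Rightarrow> ('j \<Rightarrow> complex) \<Rightarrow> ('j \<Rightarrow> complex)) \<Rightarrow> (nat \<Rightarrow> op)" where
  "sim s z = (\<lambda>i v. if v \<in> HH then inv_into HH s (z i (s v)) else (\<lambda>_. 0))"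

definition dsum :: "enat \<Rightarrow> (nat \<Rightarrow> nat \<Rightarrow> op)
                    \<Rightarrow> (nat \<Rightarrow> (nat \<times> nat \<Rightarrow> complex) \<Rightarrow> (nat \<times> nat \<Rightarrow> complex))" where
  "dsum l xs = (\<lambda>i w. if w \<in> Hsum l then
      (\<lambda>(n, m). if enat n < l then xs n i (\<lambda>m'. w (n, m')) m else 0)
    else (\<lambda>_. 0))"

definition diag2 :: "(nat \<Rightarrow> op) \<Rightarrow> (nat \<Rightarrow> op)
                    \<Rightarrow> (nat \<Rightarrow> (nat \<times> nat \<Rightarrow> complex) \<Rightarrow> (nat \<times> nat \<Rightarrow> complex))" where
  "diag2 x y = dsum 2 (\<lambda>n. if n = 0 then x else y)"

definition nc_domain :: "nat \<Rightarrow> (nat \<Rightarrow> op) set \<Rightarrow> bool" where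
  "nc_domain d \<Omega> \<longleftrightarrow> \<Omega> \<subseteq> tup d \<and>
     (\<exists>\<Omega>k :: nat \<Rightarrow> (nat \<Rightarrow> op) set.
        (\<forall>k. \<Omega>k k \<subseteq> \<Omega>) \<and>
        (\<forall>k. \<Omega>k k \<subseteq> tint d (\<Omega>k (Suc k))) \<and>
        \<Omega> = (\<Union>k. \<Omega>k k) \<and>
        (\<forall>k. \<exists>C. \<forall>x\<in>\<Omega>k k. tnorm d x \<le> C) \<and>
        (\<forall>k. \<forall>x\<in>\<Omega>k k. \<forall>u. unitary_op u \<longrightarrow> sim u x \<in> \<Omega>k k) \<and>
        (\<forall>k. \<forall>l::enat. \<forall>xs. 1 \<le> l \<longrightarrow> (\<forall>n. enat n < l \<longrightarrow> xs n \<in> \<Omega>k k) \<longrightarrow>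
            (\<exists>u. unitary_to (Hsum l) u \<and> sim u (dsum l xs) \<in> \<Omega>k k)))"

definition nc_function :: "nat \<Rightarrow> nat \<Rightarrow> (nat \<Rightarrow> op) set \<Rightarrow> ((nat \<Rightarrow> op) \<Rightarrow> (nat \<Rightarrow> op)) \<Rightarrow> bool" where
  "nc_function d r \<Omega> f \<longleftrightarrow> (\<forall>x\<in>\<Omega>. f x \<in> tup r) \<and>
     (\<forall>x\<in>\<Omega>. \<forall>y\<in>\<Omega>. \<forall>s. invertible_to (Hsum 2) s \<longrightarrow> sim s (diag2 x y) \<in> \<Omega> \<longrightarrow>
         f (sim s (diag2 x y)) = sim s (diag2 (f x) (f y)))"

end

theory Submission
  imports Defs
begin

definition ns :: "('i \<Rightarrow> complex) \<Rightarrow> real" where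
  "ns v = (\<Sum>\<^sub>\<infinity>i. (cmod (v i))^2)"

lemma vnorm_ns: "vnorm v = sqrt (ns v)" by (simp add: vnorm_def ns_def)

lemma ns_nonneg: "0 \<le> ns v" unfolding ns_def by (rule infsum_nonneg) auto

definition good :: "op \<Rightarrow> bool" where
  "good M \<longleftrightarrow> (\<forall>v\<in>HH. M v \<in> HH) \<and>
     (\<forall>p\<in>HH. \<forall>q\<in>HH. \<forall>\<alpha> \<beta>. M (\<lambda>i. \<alpha> * p i + \<beta> * q i) = (\<lambda>i. \<alpha> * M p i + \<beta> * M q i)) \<and>
     (\<exists>K\<ge>0. \<forall>v\<in>HH. ns (M v) \<le> K * ns v)"

lemma HH_zero[simp]: "(\<lambda>_. 0) \<in> HH" by (simp add: HH_def sqsum_def)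

lemma Bop_good: assumes "L \<in> Bop" shows "good L"
proof -
  have bl: "blin HH HH L" using assms by (simp add: Bop_def)
  have "\<exists>C. \<forall>v\<in>HH. vnorm (L v) \<le> C * vnorm v" using bl unfolding blin_def by (rule conjunct2[OF conjunct2])
  then obtain C where C: "\<forall>v\<in>HH. vnorm (L v) \<le> C * vnorm v" by (rule exE)
  have kk: "\<forall>v\<in>HH. ns (L v) \<le> C^2 * ns v"
  proof
    fix v assume v: "v \<in> HH"
    have "0 \<le> vnorm (L v)" by (simp add: vnorm_ns ns_nonneg)
    hence "(vnorm (L v))^2 \<le> (C * vnorm v)^2" by (rule power_mono[OF C[rule_format, OF v]])
    moreover have "(vnorm (L v))^2 = ns (L v)" by (simp add: vnorm_ns ns_nonneg)
    moreover have "(C * vnorm v)^2 = C^2 * ns v" by (simp add: vnorm_ns ns_nonneg power_mult_distrib)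
    ultimately show "ns (L v) \<le> C^2 * ns v" by simp
  qed
  have k: "\<exists>K\<ge>0. \<forall>v\<in>HH. ns (L v) \<le> K * ns v"
    by (rule exI[of _ "C^2"], rule conjI, simp, rule kk)
  have m: "\<forall>v\<in>HH. L v \<in> HH" using bl unfolding blin_def by (rule conjunct1)
  have l: "\<forall>p\<in>HH. \<forall>q\<in>HH. \<forall>\<alpha> \<beta>. L (\<lambda>i. \<alpha> * p i + \<beta> * q i) = (\<lambda>i. \<alpha> * L p i + \<beta> * L q i)"
    using bl unfolding blin_def by (rule conjunct1[OF conjunct2])
  show ?thesis unfolding good_def using m l k by (intro conjI)
qed

lemma sqsum_zero[simp]: "(\<lambda>_. 0) \<in> sqsum" by (simp add: sqsum_def)

lemma ns_zero[simp]: "ns (\<lambda>_. 0) = 0" by (simp add: ns_def)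

lemma sqsum_scale:
  assumes "a \<in> sqsum"
  shows "(\<lambda>i. c * a i) \<in> sqsum" "ns (\<lambda>i. c * a i) = (cmod c)^2 * ns a"
proof -
  have e: "(\<lambda>i. (cmod (c * a i))^2) = (\<lambda>i. (cmod c)^2 * (cmod (a i))^2)"
    by (simp add: norm_mult power_mult_distrib)
  show "(\<lambda>i. c * a i) \<in> sqsum" using assms unfolding sqsum_def mem_Collect_eq e
    by (rule summable_on_cmult_right)
  show "ns (\<lambda>i. c * a i) = (cmod c)^2 * ns a" unfolding ns_def e
    by (rule infsum_cmult_right) (use assms in \<open>auto simp: sqsum_def\<close>)
qed

lemma sq_add_le: "(cmod (x + y))^2 \<le> 2 * (cmod x)^2 + 2 * (cmod y)^2"
proof -
  have "cmod (x+y) \<le> cmod x + cmod y" by (rule norm_triangle_ineq)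
  hence "(cmod (x+y))^2 \<le> (cmod x + cmod y)^2" by (simp add: power_mono)
  also have "\<dots> \<le> 2 * (cmod x)^2 + 2 * (cmod y)^2"
  proof -
    have "0 \<le> (cmod x - cmod y)^2" by simp
    thus ?thesis unfolding power2_sum power2_diff by linarith
  qed
  finally show ?thesis .
qed

lemma sqsum_add:
  assumes "a \<in> sqsum" "b \<in> sqsum"
  shows "(\<lambda>i. a i + b i) \<in> sqsum" "ns (\<lambda>i. a i + b i) \<le> 2 * ns a + 2 * ns b"
proof -
  have sa: "(\<lambda>i. (cmod (a i))^2) summable_on UNIV" and sb: "(\<lambda>i. (cmod (b i))^2) summable_on UNIV"
    using assms by (auto simp: sqsum_def)
  have s2: "(\<lambda>i. 2 * (cmod (a i))^2 + 2 * (cmod (b i))^2) summable_on UNIV"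
    by (intro summable_on_add summable_on_cmult_right sa sb)
  have s1: "(\<lambda>i. (cmod (a i + b i))^2) summable_on UNIV"
    by (rule summable_on_comparison_test[OF s2]) (auto simp: sq_add_le)
  thus "(\<lambda>i. a i + b i) \<in> sqsum" by (simp add: sqsum_def)
  have "ns (\<lambda>i. a i + b i) \<le> (\<Sum>\<^sub>\<infinity>i. 2 * (cmod (a i))^2 + 2 * (cmod (b i))^2)"
    unfolding ns_def by (rule infsum_mono[OF s1 s2]) (simp add: sq_add_le)
  also have "\<dots> = 2 * ns a + 2 * ns b"
    unfolding ns_def
    using infsum_add[OF summable_on_cmult_right[OF sa, of 2] summable_on_cmult_right[OF sb, of 2]]
      infsum_cmult_right[OF sa, of 2] infsum_cmult_right[OF sb, of 2] by simp
  finally show "ns (\<lambda>i. a i + b i) \<le> 2 * ns a + 2 * ns b" .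
qed

lemma sqsum_lin:
  assumes "a \<in> sqsum" "b \<in> sqsum"
  shows "(\<lambda>i. \<alpha> * a i + \<beta> * b i) \<in> sqsum"
  using sqsum_add(1)[OF sqsum_scale(1)[OF assms(1)] sqsum_scale(1)[OF assms(2)]] .

lemma sqsum_neg: assumes "a \<in> sqsum" shows "(\<lambda>i. - a i) \<in> sqsum" "ns (\<lambda>i. - a i) = ns a"
  using sqsum_scale[OF assms, of "-1"] by simp_all

lemma enat_less2: "(enat n < 2) = (n < 2)"
  by (simp add: numeral_eq_enat)

definition pr :: "(nat\<Rightarrow>complex) \<Rightarrow> (nat\<Rightarrow>complex) \<Rightarrow> (nat\<times>nat\<Rightarrow>complex)" where
  "pr a b = (\<lambda>(n,m). if n=0 then a m else if n=1 then b m else 0)"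

definition rw :: "nat \<Rightarrow> (nat\<times>nat\<Rightarrow>complex) \<Rightarrow> nat \<Rightarrow> complex" where
  "rw n w = (\<lambda>m. w (n,m))"

lemma row_pr[simp]: "rw 0 (pr a b) = a" "rw 1 (pr a b) = b" "rw (Suc 0) (pr a b) = b"
  by (auto simp: rw_def pr_def)

lemma pr_app[simp]: "pr a b (0,m) = a m" "pr a b (1,m) = b m"
  by (auto simp: pr_def)

lemma pr_eq_iff: "(pr a b = pr c e) = (a = c \<and> b = e)"
  by (metis row_pr)

lemma pr_Hsum:
  assumes a: "a \<in> HH" and b: "b \<in> HH"
  shows "pr a b \<in> Hsum 2" "ns (pr a b) = ns a + ns b"
proof -
  define g where "g = (\<lambda>p. (cmod (pr a b p))^2)"
  have i0: "inj (Pair (0::nat))" and i1: "inj (Pair (1::nat))" by (auto simp: inj_on_def)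
  have g0: "g \<circ> Pair 0 = (\<lambda>m. (cmod (a m))^2)" and g1: "g \<circ> Pair 1 = (\<lambda>m. (cmod (b m))^2)"
    by (auto simp: g_def pr_def)
  have sa: "(\<lambda>m. (cmod (a m))^2) summable_on UNIV" using a by (simp add: HH_def sqsum_def)
  have sb: "(\<lambda>m. (cmod (b m))^2) summable_on UNIV" using b by (simp add: HH_def sqsum_def)
  have s0: "g summable_on range (Pair 0)" using summable_on_reindex[OF i0, of g] g0 sa by simp
  have s1: "g summable_on range (Pair 1)" using summable_on_reindex[OF i1, of g] g1 sb by simp
  have dj: "range (Pair (0::nat)) \<inter> range (Pair 1) = {}" by auto
  have su: "g summable_on (range (Pair 0) \<union> range (Pair 1))"
    by (rule summable_on_Un_disjoint[OF s0 s1 dj])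
  have out: "\<And>p. p \<in> UNIV - (range (Pair 0) \<union> range (Pair 1)) \<Longrightarrow> g p = 0"
    by (auto simp: g_def pr_def split: prod.splits)
  have "g summable_on UNIV"
    using summable_on_cong_neutral[of UNIV "range (Pair 0) \<union> range (Pair 1)" g g] out su by auto
  moreover have "\<forall>n m. \<not> enat n < 2 \<longrightarrow> pr a b (n, m) = 0"
    by (auto simp: enat_less2 pr_def)
  ultimately show "pr a b \<in> Hsum 2" by (simp add: Hsum_def sqsum_def g_def)
  have "ns (pr a b) = infsum g UNIV" by (simp add: ns_def g_def)
  also have "\<dots> = infsum g (range (Pair 0) \<union> range (Pair 1))"
    using infsum_cong_neutral[of UNIV "range (Pair 0) \<union> range (Pair 1)" g g] out by auto
  also have "\<dots> = infsum g (range (Pair 0)) + infsum g (range (Pair 1))"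
    by (rule infsum_Un_disjoint[OF s0 s1 dj])
  also have "\<dots> = ns a + ns b"
    using infsum_reindex[OF i0, of g] infsum_reindex[OF i1, of g] g0 g1 by (simp add: ns_def)
  finally show "ns (pr a b) = ns a + ns b" .
qed

lemma Hsum2_rows:
  assumes w: "w \<in> Hsum 2"
  shows "rw 0 w \<in> HH" "rw 1 w \<in> HH" "pr (rw 0 w) (rw 1 w) = w"
proof -
  define g where "g = (\<lambda>p. (cmod (w p))^2)"
  have sg: "g summable_on UNIV" using w by (simp add: Hsum_def sqsum_def g_def)
  have "\<And>k. (\<lambda>m. (cmod (rw k w m))^2) summable_on UNIV"
  proof -
    fix k :: nat
    have ik: "inj (Pair k)" by (auto simp: inj_on_def)
    have "g summable_on range (Pair k)" by (rule summable_on_subset_banach[OF sg]) auto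
    hence "(g \<circ> Pair k) summable_on UNIV" using summable_on_reindex[OF ik, of g] by simp
    moreover have "g \<circ> Pair k = (\<lambda>m. (cmod (rw k w m))^2)" by (auto simp: g_def rw_def)
    ultimately show "(\<lambda>m. (cmod (rw k w m))^2) summable_on UNIV" by simp
  qed
  thus "rw 0 w \<in> HH" "rw 1 w \<in> HH" by (auto simp: HH_def sqsum_def)
  show "pr (rw 0 w) (rw 1 w) = w"
  proof
    fix p :: "nat \<times> nat"
    obtain n m where p: "p = (n,m)" by force
    show "pr (rw 0 w) (rw 1 w) p = w p"
      using w by (auto simp: p pr_def rw_def Hsum_def enat_less2)
  qed
qed

lemma HH_lin: "a \<in> HH \<Longrightarrow> b \<in> HH \<Longrightarrow> (\<lambda>i. \<alpha> * a i + \<beta> * b i) \<in> HH"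
  by (simp add: HH_def sqsum_lin)

lemma HH_add: "a \<in> HH \<Longrightarrow> b \<in> HH \<Longrightarrow> (\<lambda>i. a i + b i) \<in> HH"
  by (simp add: HH_def sqsum_add)

lemma HH_neg: "a \<in> HH \<Longrightarrow> (\<lambda>i. - a i) \<in> HH"
  by (simp add: HH_def sqsum_neg)


lemma good_neg: assumes "good M" shows "good (\<lambda>v i. - M v i)"
proof -
  have 1: "\<forall>v\<in>HH. (\<lambda>i. - M v i) \<in> HH" using assms HH_neg by (auto simp: good_def)
  have 2: "\<forall>v\<in>HH. ns (\<lambda>i. - M v i) = ns (M v)" using assms sqsum_neg(2) by (auto simp: good_def HH_def)
  show ?thesis using assms 1 2 unfolding good_def by (auto simp: fun_eq_iff algebra_simps)
qed

definition SM :: "op \<Rightarrow> (nat\<times>nat\<Rightarrow>complex) \<Rightarrow> (nat\<times>nat\<Rightarrow>complex)" where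
  "SM M w = pr (rw 0 w) (\<lambda>m. rw 1 w m + M (rw 0 w) m)"

lemma SM_Hsum: assumes "good M" "w \<in> Hsum 2" shows "SM M w \<in> Hsum 2"
proof -
  have "rw 0 w \<in> HH" "rw 1 w \<in> HH" using Hsum2_rows[OF assms(2)] by auto
  moreover hence "M (rw 0 w) \<in> HH" using assms(1) by (simp add: good_def)
  ultimately show ?thesis unfolding SM_def by (intro pr_Hsum HH_add)
qed

lemma SM_bound: assumes "good M" shows "\<exists>K\<ge>0. \<forall>w\<in>Hsum 2. ns (SM M w) \<le> K * ns w"
proof -
  obtain K where K: "K \<ge> 0" "\<forall>v\<in>HH. ns (M v) \<le> K * ns v" using assms by (auto simp: good_def)
  have "\<forall>w\<in>Hsum 2. ns (SM M w) \<le> (3 + 2*K) * ns w"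
  proof
    fix w assume w: "w \<in> Hsum 2"
    define a b where "a = rw 0 w" and "b = rw 1 w"
    have a: "a \<in> HH" and b: "b \<in> HH" and wab: "w = pr a b" using Hsum2_rows[OF w] by (auto simp: a_def b_def)
    have Ma: "M a \<in> HH" using assms a by (simp add: good_def)
    have "ns (SM M w) = ns a + ns (\<lambda>m. b m + M a m)"
      unfolding SM_def a_def[symmetric] b_def[symmetric] by (rule pr_Hsum(2)[OF a HH_add[OF b Ma]])
    also have "\<dots> \<le> ns a + (2 * ns b + 2 * ns (M a))"
      using sqsum_add(2)[of b "M a"] b Ma by (simp add: HH_def)
    also have "\<dots> \<le> ns a + 2 * ns b + 2 * (K * ns a)" using K a by simp
    also have "\<dots> \<le> (3 + 2*K) * (ns a + ns b)"
      using ns_nonneg[of a] ns_nonneg[of b] K(1) by (simp add: algebra_simps)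
    also have "ns a + ns b = ns w" using pr_Hsum(2)[OF a b] wab by simp
    finally show "ns (SM M w) \<le> (3 + 2*K) * ns w" .
  qed
  thus ?thesis using K(1) by (intro exI[of _ "3 + 2*K"]) auto
qed

lemma pr_lin: "pr (\<lambda>m. \<alpha>*a1 m+\<beta>*a2 m) (\<lambda>m. \<alpha>*c1 m + \<beta>*c2 m) = (\<lambda>i. \<alpha>*pr a1 c1 i + \<beta>*pr a2 c2 i)"
  by (auto simp: pr_def fun_eq_iff)

lemma row_lin: "rw k (\<lambda>i. \<alpha>*w1 i+\<beta>*w2 i) = (\<lambda>m. \<alpha>*rw k w1 m + \<beta>*rw k w2 m)"
  by (simp add: rw_def)

lemma SM_lin: assumes "good M" "w1 \<in> Hsum 2" "w2 \<in> Hsum 2"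
  shows "SM M (\<lambda>i. \<alpha>*w1 i+\<beta>*w2 i) = (\<lambda>i. \<alpha> * SM M w1 i + \<beta> * SM M w2 i)"
proof -
  have r: "rw 0 w1 \<in> HH" "rw 0 w2 \<in> HH" using Hsum2_rows assms(2,3) by auto
  have "M (\<lambda>m. \<alpha>*rw 0 w1 m + \<beta>*rw 0 w2 m) = (\<lambda>m. \<alpha>*M (rw 0 w1) m + \<beta>*M (rw 0 w2) m)"
    using assms(1) r by (simp add: good_def)
  hence "SM M (\<lambda>i. \<alpha>*w1 i+\<beta>*w2 i) = pr (\<lambda>m. \<alpha>*rw 0 w1 m + \<beta>*rw 0 w2 m)
     (\<lambda>m. \<alpha>*(rw 1 w1 m + M (rw 0 w1) m) + \<beta>*(rw 1 w2 m + M (rw 0 w2) m))"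
    unfolding SM_def row_lin by (simp add: algebra_simps)
  also have "\<dots> = (\<lambda>i. \<alpha> * SM M w1 i + \<beta> * SM M w2 i)"
    unfolding SM_def by (rule pr_lin)
  finally show ?thesis .
qed

lemma SM_inv: assumes "w \<in> Hsum 2"
  shows "SM (\<lambda>v i. - M v i) (SM M w) = w" "SM M (SM (\<lambda>v i. - M v i) w) = w"
proof -
  have e: "pr (rw 0 w) (rw 1 w) = w" by (rule Hsum2_rows(3)[OF assms])
  have e1: "(\<lambda>m. (rw 1 w m + M (rw 0 w) m) + - M (rw 0 w) m) = rw 1 w" by (simp add: fun_eq_iff)
  have e2: "(\<lambda>m. (rw 1 w m + - M (rw 0 w) m) + M (rw 0 w) m) = rw 1 w" by (simp add: fun_eq_iff)
  show "SM (\<lambda>v i. - M v i) (SM M w) = w" unfolding SM_def row_pr(1,2) e1 e by (rule refl)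
  show "SM M (SM (\<lambda>v i. - M v i) w) = w" unfolding SM_def row_pr(1,2) e2 e by (rule refl)
qed

lemma ns_bound_vnorm: assumes "\<exists>K\<ge>0. \<forall>v\<in>A. ns (T v) \<le> K * ns v"
  shows "\<exists>C. \<forall>v\<in>A. vnorm (T v) \<le> C * vnorm v"
proof -
  obtain K where K: "K \<ge> 0" "\<forall>v\<in>A. ns (T v) \<le> K * ns v" using assms by auto
  have "\<forall>v\<in>A. vnorm (T v) \<le> sqrt K * vnorm v"
    using K by (auto simp: vnorm_ns real_sqrt_mult[symmetric])
  thus ?thesis by blast
qed

lemma Hsum2_lin: assumes "p \<in> Hsum 2" "q \<in> Hsum 2" shows "(\<lambda>i. \<alpha>*p i+\<beta>*q i) \<in> Hsum 2"
proof -
  have "(\<lambda>i. \<alpha>*p i+\<beta>*q i) = (\<lambda>i. \<alpha>*pr (rw 0 p) (rw 1 p) i+\<beta>*pr (rw 0 q) (rw 1 q) i)"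
    using Hsum2_rows(3)[OF assms(1)] Hsum2_rows(3)[OF assms(2)] by simp
  also have "\<dots> = pr (\<lambda>m. \<alpha>*rw 0 p m+\<beta>*rw 0 q m) (\<lambda>m. \<alpha>*rw 1 p m + \<beta>*rw 1 q m)"
    by (rule pr_lin[symmetric])
  finally show ?thesis using Hsum2_rows[OF assms(1)] Hsum2_rows[OF assms(2)]
    by (auto intro!: pr_Hsum HH_lin)
qed

lemma unit_facts: assumes "unitary_to (Hsum 2) u"
  shows "\<And>v. v \<in> HH \<Longrightarrow> u v \<in> Hsum 2"
    "\<And>p q \<alpha> \<beta>. p \<in> HH \<Longrightarrow> q \<in> HH \<Longrightarrow> u (\<lambda>i. \<alpha> * p i + \<beta> * q i) = (\<lambda>j. \<alpha> * u p j + \<beta> * u q j)"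
    "bij_betw u HH (Hsum 2)" "inj_on u HH" "u ` HH = Hsum 2"
    "\<And>v. v \<in> HH \<Longrightarrow> ns (u v) = ns v"
proof -
  have bl: "blin HH (Hsum 2) u" and bj: "bij_betw u HH (Hsum 2)" and iso: "\<forall>v\<in>HH. vnorm (u v) = vnorm v"
    using assms unfolding unitary_to_def by auto
  show "\<And>v. v \<in> HH \<Longrightarrow> u v \<in> Hsum 2" using bl unfolding blin_def by blast
  show "\<And>p q \<alpha> \<beta>. p \<in> HH \<Longrightarrow> q \<in> HH \<Longrightarrow> u (\<lambda>i. \<alpha> * p i + \<beta> * q i) = (\<lambda>j. \<alpha> * u p j + \<beta> * u q j)"
    using bl unfolding blin_def by blast
  show "bij_betw u HH (Hsum 2)" by (rule bj)
  show "inj_on u HH" using bj by (rule bij_betw_imp_inj_on)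
  show "u ` HH = Hsum 2" using bj by (rule bij_betw_imp_surj_on)
  show "\<And>v. v \<in> HH \<Longrightarrow> ns (u v) = ns v" using iso by (simp add: vnorm_ns)
qed

lemma inv_u: assumes "unitary_to (Hsum 2) u" "p \<in> Hsum 2"
  shows "inv_into HH u p \<in> HH" "u (inv_into HH u p) = p" "ns (inv_into HH u p) = ns p"
proof -
  note U = unit_facts[OF assms(1)]
  show 1: "inv_into HH u p \<in> HH" using assms(2) U(5) by (metis inv_into_into)
  show 2: "u (inv_into HH u p) = p" using assms(2) U(5) by (metis f_inv_into_f)
  show "ns (inv_into HH u p) = ns p" using U(6)[OF 1] 2 by simp
qed

lemma inv_u_lin: assumes "unitary_to (Hsum 2) u" "p \<in> Hsum 2" "q \<in> Hsum 2"
  shows "inv_into HH u (\<lambda>i. \<alpha>*p i+\<beta>*q i) = (\<lambda>i. \<alpha>*inv_into HH u p i+\<beta>*inv_into HH u q i)"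
proof -
  note U = unit_facts[OF assms(1)]
  note P = inv_u[OF assms(1,2)] and Q = inv_u[OF assms(1,3)]
  have "u (\<lambda>i. \<alpha>*inv_into HH u p i+\<beta>*inv_into HH u q i) = (\<lambda>i. \<alpha>*p i+\<beta>*q i)"
    using U(2)[OF P(1) Q(1)] P(2) Q(2) by simp
  thus ?thesis by (rule inv_into_f_eq[OF U(4) HH_lin[OF P(1) Q(1)]])
qed

lemma s_props: assumes u: "unitary_to (Hsum 2) u" and M: "good M"
  shows "invertible_to (Hsum 2) (SM M \<circ> u)"
    "\<And>w. w \<in> Hsum 2 \<Longrightarrow> inv_into HH (SM M \<circ> u) w = inv_into HH u (SM (\<lambda>v i. - M v i) w)"
proof -
  define N where "N = (\<lambda>v i. - M v i)"
  have N: "good N" using good_neg[OF M] by (simp add: N_def)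
  note U = unit_facts[OF u]
  define s where "s = SM M \<circ> u"
  have sin: "\<And>v. v \<in> HH \<Longrightarrow> s v \<in> Hsum 2" using U(1) SM_Hsum[OF M] by (simp add: s_def)
  have inj: "inj_on s HH"
  proof (rule inj_onI)
    fix v1 v2 assume v: "v1 \<in> HH" "v2 \<in> HH" "s v1 = s v2"
    hence "SM N (SM M (u v1)) = SM N (SM M (u v2))" by (simp add: s_def)
    hence "u v1 = u v2" using SM_inv(1)[OF U(1)[OF v(1)], of M] SM_inv(1)[OF U(1)[OF v(2)], of M]
      by (simp add: N_def)
    thus "v1 = v2" using U(4) v by (meson inj_on_def)
  qed
  have invf: "inv_into HH s w = inv_into HH u (SM N w)" if w: "w \<in> Hsum 2" for w
  proof -
    have sw: "SM N w \<in> Hsum 2" using SM_Hsum[OF N w] .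
    have "s (inv_into HH u (SM N w)) = w"
      using inv_u(2)[OF u sw] SM_inv(2)[OF w, of M] by (simp add: s_def N_def)
    thus ?thesis using inv_into_f_eq[OF inj inv_u(1)[OF u sw]] by simp
  qed
  thus "\<And>w. w \<in> Hsum 2 \<Longrightarrow> inv_into HH (SM M \<circ> u) w = inv_into HH u (SM (\<lambda>v i. - M v i) w)"
    by (simp add: s_def N_def)
  have img: "s ` HH = Hsum 2"
  proof
    show "s ` HH \<subseteq> Hsum 2" using sin by auto
    show "Hsum 2 \<subseteq> s ` HH"
    proof
      fix w assume w: "w \<in> Hsum 2"
      have sw: "SM N w \<in> Hsum 2" using SM_Hsum[OF N w] .
      have "s (inv_into HH u (SM N w)) = w"
        using inv_u(2)[OF u sw] SM_inv(2)[OF w, of M] by (simp add: s_def N_def)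
      thus "w \<in> s ` HH" using inv_u(1)[OF u sw] by (metis imageI)
    qed
  qed
  have bij: "bij_betw s HH (Hsum 2)" using inj img by (simp add: bij_betw_def)
  have b1: "blin HH (Hsum 2) s"
    unfolding blin_def
  proof (intro conjI)
    show "\<forall>v\<in>HH. s v \<in> Hsum 2" using sin by auto
    show "\<forall>p\<in>HH. \<forall>q\<in>HH. \<forall>a b. s (\<lambda>i. a * p i + b * q i) = (\<lambda>j. a * s p j + b * s q j)"
    proof (intro ballI allI)
      fix p q a b assume p: "p \<in> HH" and q: "q \<in> HH"
      show "s (\<lambda>i. a * p i + b * q i) = (\<lambda>j. a * s p j + b * s q j)"
        unfolding s_def o_def U(2)[OF p q] by (rule SM_lin[OF M U(1)[OF p] U(1)[OF q]])
    qed
    obtain K where K: "K \<ge> 0" "\<forall>w\<in>Hsum 2. ns (SM M w) \<le> K * ns w" using SM_bound[OF M] by auto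
    have "\<forall>v\<in>HH. ns (s v) \<le> K * ns v"
    proof
      fix v assume v: "v \<in> HH"
      have "ns (SM M (u v)) \<le> K * ns (u v)" using K(2) U(1)[OF v] by blast
      thus "ns (s v) \<le> K * ns v" using U(6)[OF v] by (simp add: s_def)
    qed
    thus "\<exists>C. \<forall>v\<in>HH. vnorm (s v) \<le> C * vnorm v" using K(1) by (intro ns_bound_vnorm) auto
  qed
  have b2: "blin (Hsum 2) HH (inv_into HH s)"
    unfolding blin_def
  proof (intro conjI)
    show "\<forall>v\<in>Hsum 2. inv_into HH s v \<in> HH"
    proof
      fix v assume v: "v \<in> Hsum 2"
      show "inv_into HH s v \<in> HH" using invf[OF v] inv_u(1)[OF u SM_Hsum[OF N v]] by simp
    qed
    show "\<forall>p\<in>Hsum 2. \<forall>q\<in>Hsum 2. \<forall>a b. inv_into HH s (\<lambda>i. a * p i + b * q i) = (\<lambda>j. a * inv_into HH s p j + b * inv_into HH s q j)"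
    proof (intro ballI allI)
      fix p q a b assume p: "p \<in> Hsum 2" and q: "q \<in> Hsum 2"
      have "inv_into HH s (\<lambda>i. a * p i + b * q i) = inv_into HH u (SM N (\<lambda>i. a * p i + b * q i))"
        by (rule invf[OF Hsum2_lin[OF p q]])
      also have "\<dots> = inv_into HH u (\<lambda>i. a * SM N p i + b * SM N q i)" by (simp only: SM_lin[OF N p q])
      also have "\<dots> = (\<lambda>j. a * inv_into HH u (SM N p) j + b * inv_into HH u (SM N q) j)"
        by (rule inv_u_lin[OF u SM_Hsum[OF N p] SM_Hsum[OF N q]])
      also have "\<dots> = (\<lambda>j. a * inv_into HH s p j + b * inv_into HH s q j)" by (simp only: invf[OF p] invf[OF q])
      finally show "inv_into HH s (\<lambda>i. a * p i + b * q i) = (\<lambda>j. a * inv_into HH s p j + b * inv_into HH s q j)" .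
    qed
    obtain K where K: "K \<ge> 0" "\<forall>w\<in>Hsum 2. ns (SM N w) \<le> K * ns w" using SM_bound[OF N] by auto
    have "\<forall>v\<in>Hsum 2. ns (inv_into HH s v) \<le> K * ns v"
    proof
      fix v assume v: "v \<in> Hsum 2"
      show "ns (inv_into HH s v) \<le> K * ns v" using K(2) v invf[OF v] inv_u(3)[OF u SM_Hsum[OF N v]] by simp
    qed
    thus "\<exists>C. \<forall>v\<in>Hsum 2. vnorm (inv_into HH s v) \<le> C * vnorm v" using K(1) by (intro ns_bound_vnorm) auto
  qed
  show "invertible_to (Hsum 2) (SM M \<circ> u)" using b1 b2 bij by (simp add: invertible_to_def s_def)
qed

definition opgood :: "op \<Rightarrow> bool" where
  "opgood T \<longleftrightarrow> (\<forall>v\<in>HH. T v \<in> HH) \<and> (\<forall>a\<in>HH. \<forall>b\<in>HH. T (\<lambda>i. a i + b i) = (\<lambda>i. T a i + T b i))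
     \<and> (\<forall>v. v \<notin> HH \<longrightarrow> T v = (\<lambda>_. 0)) \<and> T (\<lambda>_. 0) = (\<lambda>_. 0)"

lemma Bop_opgood: assumes "T \<in> Bop" shows "opgood T"
proof -
  have bl: "blin HH HH T" and out: "\<forall>v. v \<notin> HH \<longrightarrow> T v = (\<lambda>_. 0)" using assms by (auto simp: Bop_def)
  have m: "\<forall>v\<in>HH. T v \<in> HH" using bl unfolding blin_def by (rule conjunct1)
  have l: "\<forall>p\<in>HH. \<forall>q\<in>HH. \<forall>\<alpha> \<beta>. T (\<lambda>i. \<alpha> * p i + \<beta> * q i) = (\<lambda>i. \<alpha> * T p i + \<beta> * T q i)"
    using bl unfolding blin_def by (rule conjunct1[OF conjunct2])
  have a: "\<forall>a\<in>HH. \<forall>b\<in>HH. T (\<lambda>i. a i + b i) = (\<lambda>i. T a i + T b i)"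
  proof (intro ballI)
    fix a b assume "a \<in> HH" "b \<in> HH"
    thus "T (\<lambda>i. a i + b i) = (\<lambda>i. T a i + T b i)" using l[rule_format, of a b 1 1] by simp
  qed
  have z: "T (\<lambda>_. 0) = (\<lambda>_. 0)" using l[rule_format, OF HH_zero HH_zero, of 0 0] by simp
  show ?thesis unfolding opgood_def using m a out z by (intro conjI)
qed

lemma tup_opgood: assumes "X \<in> tup n" shows "opgood (X i)"
proof (cases "i < n")
  case True thus ?thesis using assms Bop_opgood by (auto simp: tup_def)
next
  case False
  hence "X i = zop" using assms by (auto simp: tup_def)
  thus ?thesis by (simp add: opgood_def zop_def)
qed

lemma diag2_pr: assumes "p \<in> HH" "q \<in> HH"
  shows "diag2 X Y i (pr p q) = pr (X i p) (Y i q)"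
proof -
  have h: "pr p q \<in> Hsum 2" by (rule pr_Hsum(1)[OF assms])
  show ?thesis
  proof
    fix z :: "nat \<times> nat"
    obtain n m where z: "z = (n,m)" by force
    have r0: "(\<lambda>m'. pr p q (0, m')) = p" and r1: "(\<lambda>m'. pr p q (Suc 0, m')) = q" by (auto simp: pr_def)
    show "diag2 X Y i (pr p q) z = pr (X i p) (Y i q) z"
      using h unfolding diag2_def dsum_def z
      by (cases "n = 0"; cases "n = 1") (auto simp: enat_less2 pr_def r0 r1)
  qed
qed

lemma sim_comp:
  assumes u: "unitary_to (Hsum 2) u" and M: "good M" and X: "opgood (X i)" and Y: "opgood (Y i)" and v: "v \<in> HH"
  shows "sim (SM M \<circ> u) (diag2 X Y) i v = inv_into HH u (pr (X i (rw 0 (u v)))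
           (\<lambda>m. Y i (rw 1 (u v)) m + Y i (M (rw 0 (u v))) m + - M (X i (rw 0 (u v))) m))"
    "pr (X i (rw 0 (u v))) (\<lambda>m. Y i (rw 1 (u v)) m + Y i (M (rw 0 (u v))) m + - M (X i (rw 0 (u v))) m) \<in> Hsum 2"
proof -
  define w where "w = u v"
  have w: "w \<in> Hsum 2" using unit_facts(1)[OF u v] by (simp add: w_def)
  define a b where "a = rw 0 w" and "b = rw 1 w"
  have a: "a \<in> HH" and b: "b \<in> HH" using Hsum2_rows[OF w] by (auto simp: a_def b_def)
  have Ma: "M a \<in> HH" using M a by (simp add: good_def)
  define c where "c = (\<lambda>m. b m + M a m)"
  have c: "c \<in> HH" unfolding c_def by (rule HH_add[OF b Ma])
  have sv: "(SM M \<circ> u) v = pr a c" by (simp add: SM_def w_def[symmetric] a_def b_def c_def)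
  have Xa: "X i a \<in> HH" using X a by (simp add: opgood_def)
  have Yc: "Y i c = (\<lambda>m. Y i b m + Y i (M a) m)" using Y b Ma by (simp add: opgood_def c_def)
  have Yc': "Y i c \<in> HH" using Y c by (simp add: opgood_def)
  define z where "z = pr (X i a) (Y i c)"
  have z: "z \<in> Hsum 2" unfolding z_def by (rule pr_Hsum(1)[OF Xa Yc'])
  have dz: "diag2 X Y i ((SM M \<circ> u) v) = z" unfolding sv z_def by (rule diag2_pr[OF a c])
  have SMz: "SM (\<lambda>v i. - M v i) z = pr (X i a) (\<lambda>m. Y i b m + Y i (M a) m + - M (X i a) m)"
    by (simp add: SM_def z_def Yc)
  have "sim (SM M \<circ> u) (diag2 X Y) i v = inv_into HH (SM M \<circ> u) z"
    using v dz by (simp add: sim_def)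
  also have "\<dots> = inv_into HH u (SM (\<lambda>v i. - M v i) z)" by (rule s_props(2)[OF u M z])
  finally show "sim (SM M \<circ> u) (diag2 X Y) i v = inv_into HH u (pr (X i (rw 0 (u v)))
           (\<lambda>m. Y i (rw 1 (u v)) m + Y i (M (rw 0 (u v))) m + - M (X i (rw 0 (u v))) m))"
    using SMz by (simp add: w_def a_def b_def)
  have "SM (\<lambda>v i. - M v i) z \<in> Hsum 2" by (rule SM_Hsum[OF good_neg[OF M] z])
  thus "pr (X i (rw 0 (u v))) (\<lambda>m. Y i (rw 1 (u v)) m + Y i (M (rw 0 (u v))) m + - M (X i (rw 0 (u v))) m) \<in> Hsum 2"
    using SMz by (simp add: w_def a_def b_def)
qed

lemma sim_cong: assumes "\<forall>v\<in>HH. s v = t v" shows "sim s z = sim t z"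
proof -
  have "\<And>y. (\<lambda>x. x \<in> HH \<and> s x = y) = (\<lambda>x. x \<in> HH \<and> t x = y)" using assms by auto
  hence "inv_into HH s = inv_into HH t" by (simp add: inv_into_def fun_eq_iff)
  note inv = this
  show ?thesis
  proof (rule ext, rule ext)
    fix i v
    show "sim s z i v = sim t z i v"
    proof (cases "v \<in> HH")
      case True hence "s v = t v" using assms by blast
      thus ?thesis using True inv unfolding sim_def by simp
    next
      case False thus ?thesis unfolding sim_def by simp
    qed
  qed
qed

lemma good_zero: "good (\<lambda>v i. 0)"
  unfolding good_def by (auto intro: exI[of _ 0])

lemma SM_zero: assumes "w \<in> Hsum 2" shows "SM (\<lambda>v i. 0) w = w"
  using Hsum2_rows(3)[OF assms] by (simp add: SM_def)

lemma tint_sub: assumes "1 \<le> d" shows "tint d S \<subseteq> S"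
proof
  fix x assume x: "x \<in> tint d S"
  then obtain e where e: "e > 0" "\<forall>y\<in>tup d. tnorm d (tdiff y x) < e \<longrightarrow> y \<in> S" and xt: "x \<in> tup d"
    by (auto simp: tint_def)
  have td: "tdiff x x = (\<lambda>i v n. 0)" by (simp add: tdiff_def)
  have vz: "vnorm (\<lambda>n::nat. 0::complex) = 0" by (simp add: vnorm_ns)
  have set: "{vnorm ((\<lambda>v (n::nat). 0::complex) v) | v. v \<in> HH \<and> vnorm v \<le> 1} = {0}"
  proof -
    have "\<exists>v. v \<in> HH \<and> vnorm v \<le> 1" by (rule exI[of _ "\<lambda>_. 0"]) (simp add: vz)
    thus ?thesis by (auto simp: vz)
  qed
  have op0: "opnorm (\<lambda>v n. 0) = 0" unfolding opnorm_def set by simp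
  have ne: "{..<d} \<noteq> {}" using assms by (simp add: lessThan_empty_iff)
  have "(\<lambda>i. opnorm (\<lambda>v n. 0)) ` {..<d} = {0}" using ne op0 by auto
  hence "tnorm d (tdiff x x) = 0" unfolding tnorm_def td by simp
  thus "x \<in> S" using e xt by auto
qed

theorem mainTheorem7:
  fixes d r :: nat and \<Omega> :: "(nat \<Rightarrow> op) set"
    and f :: "(nat \<Rightarrow> op) \<Rightarrow> (nat \<Rightarrow> op)"
    and x y :: "nat \<Rightarrow> op" and L :: op
  assumes "1 \<le> d" and "1 \<le> r"
    and "nc_domain d \<Omega>" and "nc_function d r \<Omega> f"
    and "x \<in> \<Omega>" and "y \<in> \<Omega>" and "L \<in> Bop"
    and "lmul L x = rmul y L"
  shows "lmul L (f x) = rmul (f y) L"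
proof -
  note d1 = assms(1) and dom = assms(3) and ncf = assms(4) and xO = assms(5) and yO = assms(6)
    and LB = assms(7) and com = assms(8)
  have Omt: "\<Omega> \<subseteq> tup d" using dom by (simp add: nc_domain_def)
  obtain Ok :: "nat \<Rightarrow> (nat \<Rightarrow> op) set" where
    O1: "\<forall>k. Ok k \<subseteq> \<Omega>" and O2: "\<forall>k. Ok k \<subseteq> tint d (Ok (Suc k))" and O3: "\<Omega> = (\<Union>k. Ok k)"
    and O6: "\<forall>k. \<forall>l::enat. \<forall>xs. 1 \<le> l \<longrightarrow> (\<forall>n. enat n < l \<longrightarrow> xs n \<in> Ok k) \<longrightarrow>
            (\<exists>u. unitary_to (Hsum l) u \<and> sim u (dsum l xs) \<in> Ok k)"
    using dom unfolding nc_domain_def by blast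
  have mono1: "\<And>k. Ok k \<subseteq> Ok (Suc k)" using O2 tint_sub[OF d1] by blast
  have mono: "\<And>k k'. k \<le> k' \<Longrightarrow> Ok k \<subseteq> Ok k'"
    by (rule lift_Suc_mono_le[of Ok]) (use mono1 in auto)
  obtain k1 where k1: "x \<in> Ok k1" using xO O3 by blast
  obtain k2 where k2: "y \<in> Ok k2" using yO O3 by blast
  define k where "k = max k1 k2"
  have xk: "x \<in> Ok k" using k1 mono[of k1 k] by (auto simp: k_def)
  have yk: "y \<in> Ok k" using k2 mono[of k2 k] by (auto simp: k_def)
  define xs :: "nat \<Rightarrow> nat \<Rightarrow> op" where "xs = (\<lambda>n. if n = 0 then x else y)"
  have "\<forall>n. enat n < 2 \<longrightarrow> xs n \<in> Ok k" using xk yk by (simp add: xs_def)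
  moreover have "(1::enat) \<le> 2" by simp
  ultimately obtain u where u: "unitary_to (Hsum 2) u" and uO: "sim u (dsum 2 xs) \<in> Ok k"
    using O6 by blast
  have D: "dsum 2 xs = diag2 x y" by (simp add: diag2_def xs_def)
  have uO': "sim u (diag2 x y) \<in> \<Omega>" using uO D O1 by auto
  define Z :: op where "Z = (\<lambda>v i. 0)"
  have Zg: "good Z" unfolding Z_def by (rule good_zero)
  have Lg: "good L" by (rule Bop_good[OF LB])
  define sL where "sL = SM L \<circ> u"
  define s0 where "s0 = SM Z \<circ> u"
  have sLi: "invertible_to (Hsum 2) sL" unfolding sL_def by (rule s_props(1)[OF u Lg])
  have s0i: "invertible_to (Hsum 2) s0" unfolding s0_def by (rule s_props(1)[OF u Zg])
  have s0u: "\<And>z. sim s0 z = sim u z"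
    by (rule sim_cong) (simp add: s0_def Z_def SM_zero unit_facts(1)[OF u])
  have xt: "x \<in> tup d" and yt: "y \<in> tup d" using Omt xO yO by auto
  have comi: "\<And>i a. L (x i a) = y i (L a)" using com unfolding lmul_def rmul_def by (metis comp_apply)
  have LO: "opgood L" by (rule Bop_opgood[OF LB])
  have eqD: "sim sL (diag2 x y) = sim s0 (diag2 x y)"
  proof (rule ext, rule ext)
    fix i v
    show "sim sL (diag2 x y) i v = sim s0 (diag2 x y) i v"
    proof (cases "v \<in> HH")
      case False thus ?thesis by (simp add: sim_def)
    next
      case True
      have X: "opgood (x i)" and Y: "opgood (y i)" using xt yt tup_opgood by auto
      have Y0: "y i (\<lambda>_. 0) = (\<lambda>_. 0)" using Y by (simp add: opgood_def)
      show ?thesis unfolding sL_def s0_def sim_comp(1)[where X=x and Y=y and i=i, OF u Lg X Y True] sim_comp(1)[where X=x and Y=y and i=i, OF u Zg X Y True]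
        by (simp add: Z_def Y0 comi)
    qed
  qed
  have in0: "sim s0 (diag2 x y) \<in> \<Omega>" using uO' s0u by simp
  have inL: "sim sL (diag2 x y) \<in> \<Omega>" using in0 eqD by simp
  have fL: "f (sim sL (diag2 x y)) = sim sL (diag2 (f x) (f y))"
    using ncf xO yO sLi inL unfolding nc_function_def by blast
  have f0: "f (sim s0 (diag2 x y)) = sim s0 (diag2 (f x) (f y))"
    using ncf xO yO s0i in0 unfolding nc_function_def by blast
  have eqF: "sim sL (diag2 (f x) (f y)) = sim s0 (diag2 (f x) (f y))" using fL f0 eqD by simp
  have fxt: "f x \<in> tup r" and fyt: "f y \<in> tup r" using ncf xO yO unfolding nc_function_def by auto
  have key: "f y i (L a) = L (f x i a)" if a: "a \<in> HH" for i a
  proof -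
    have X: "opgood (f x i)" and Y: "opgood (f y i)" using fxt fyt tup_opgood by auto
    have Y0: "f y i (\<lambda>_. 0) = (\<lambda>_. 0)" using Y by (simp add: opgood_def)
    have w0: "pr a (\<lambda>_. 0) \<in> Hsum 2" by (rule pr_Hsum(1)[OF a HH_zero])
    define v where "v = inv_into HH u (pr a (\<lambda>_. 0))"
    have v: "v \<in> HH" and uv: "u v = pr a (\<lambda>_. 0)" using inv_u(1,2)[OF u w0] by (auto simp: v_def)
    have e: "sim sL (diag2 (f x) (f y)) i v = sim s0 (diag2 (f x) (f y)) i v" using eqF by simp
    note cL = sim_comp[where X="f x" and Y="f y" and i=i, OF u Lg X Y v] and c0 = sim_comp[where X="f x" and Y="f y" and i=i, OF u Zg X Y v]
    have "pr (f x i (rw 0 (u v))) (\<lambda>m. f y i (rw 1 (u v)) m + f y i (L (rw 0 (u v))) m + - L (f x i (rw 0 (u v))) m)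
        = pr (f x i (rw 0 (u v))) (\<lambda>m. f y i (rw 1 (u v)) m + f y i (Z (rw 0 (u v))) m + - Z (f x i (rw 0 (u v))) m)"
      using e unfolding sL_def s0_def cL(1) c0(1)
      by (rule inv_into_injective) (use cL(2) c0(2) unit_facts(5)[OF u] in auto)
    hence "(\<lambda>m. f y i (rw 1 (u v)) m + f y i (L (rw 0 (u v))) m + - L (f x i (rw 0 (u v))) m)
        = (\<lambda>m. f y i (rw 1 (u v)) m + f y i (Z (rw 0 (u v))) m + - Z (f x i (rw 0 (u v))) m)"
      by (simp only: pr_eq_iff)
    hence "(\<lambda>m. f y i (L a) m + - L (f x i a) m) = (\<lambda>m. 0)"
      by (simp add: uv Z_def Y0)
    thus ?thesis by (simp add: fun_eq_iff)
  qed
  show ?thesis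
  proof (rule ext, rule ext)
    fix i v
    have X: "opgood (f x i)" and Y: "opgood (f y i)" using fxt fyt tup_opgood by auto
    show "lmul L (f x) i v = rmul (f y) L i v"
    proof (cases "v \<in> HH")
      case True thus ?thesis using key[OF True, of i] by (simp add: lmul_def rmul_def)
    next
      case False
      have "f x i v = (\<lambda>_. 0)" using X False by (simp add: opgood_def)
      moreover have "L v = (\<lambda>_. 0)" using LO False by (simp add: opgood_def)
      ultimately show ?thesis using X Y LO by (simp add: lmul_def rmul_def opgood_def)
    qed
  qed
qed

end
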